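(* Let $g\in L^1(a,b)$ and $\varepsilon>0$. Then there exists $x_\varepsilon\in\mathbb R$ such that the grid $\mathcal G_\varepsilon=\{x_\alpha:=x_\varepsilon+2\varepsilon\alpha:\ \alpha\in\mathbb Z,\ x_\alpha\in(a+\varepsilon,b-\varepsilon)\}$ contains a subset $\mathcal G'_\varepsilon\subset\mathcal G_\varepsilon$ with $$\int_{\bigcup\{I_\varepsilon(x_\alpha):x_\alpha\in\mathcal G'_\varepsilon\}}|g|\,dt+2\,\#(\mathcal G_\varepsilon\setminus\mathcal G'_\varepsilon)\le\frac1{c_0\varepsilon}\int_a^bf\Big(\varepsilon\fint_{I_\varepsilon(x)\cap(a,b)}|g|\,dt\Big)dx.$$
   Context: $0<a<b<\infty$, $c_0>0$, $f(t)=c_0t$ for $0\le t<1$ and $f(t)=c_0$ for $t\ge1$. $I_\varepsilon(x)=(x-\varepsilon,x+\varepsilon)$, $\fint_Bh=\frac1{|B|}\int_Bh$. *)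

theory Defs
  imports "HOL-Analysis.Analysis"
begin

definition fcut :: "real \<Rightarrow> real \<Rightarrow> real" where
  "fcut c0 t = (if t < 1 then c0 * t else c0)"

definition Ieps :: "real \<Rightarrow> real \<Rightarrow> real set" where
  "Ieps eps x = {x - eps <..< x + eps}"

definition avg :: "real set \<Rightarrow> (real \<Rightarrow> real) \<Rightarrow> real" where
  "avg B h = (1 / measure lborel B) * (LINT t:B|lborel. h t)"

definition grid :: "real \<Rightarrow> real \<Rightarrow> real \<Rightarrow> real \<Rightarrow> real set" where
  "grid a b eps xe = {xe + 2 * eps * real_of_int k | k. xe + 2 * eps * real_of_int k \<in> {a + eps <..< b - eps}}"

end

theory Submission
  imports Defs
begin

lemma krange:
  fixes eps a b y :: real and k :: int
  assumes "eps > 0" "2*eps*k \<le> y" "y < 2*eps*k + 2*eps" "a < y" "y < b"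
  shows "- (ceiling ((\<bar>a\<bar>+\<bar>b\<bar>)/(2*eps)) + 1) \<le> k \<and> k \<le> ceiling ((\<bar>a\<bar>+\<bar>b\<bar>)/(2*eps)) + 1"
proof -
  define c where "c = ceiling ((\<bar>a\<bar>+\<bar>b\<bar>)/(2*eps))"
  have "(\<bar>a\<bar>+\<bar>b\<bar>)/(2*eps) \<le> c" unfolding c_def by (rule le_of_int_ceiling)
  hence c: "\<bar>a\<bar>+\<bar>b\<bar> \<le> 2*eps*c" using assms(1) by (simp add: field_simps)
  have "2*eps*k < 2*eps*c" using c assms by linarith
  hence k1: "k < c" using assms(1) by simp
  have "2*eps*(-c - 1) = -(2*eps*c) - 2*eps" by (simp add: algebra_simps)
  also have "\<dots> < 2*eps*k" using c assms by linarith
  finally have "2*eps*(-c - 1) < 2*eps*k" .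
  hence "-c - 1 < k" using assms(1)
    by (metis mult_less_cancel_left_pos of_int_less_iff zero_less_mult_iff zero_less_numeral
        of_int_diff of_int_minus of_int_1)
  with k1 show ?thesis unfolding c_def by linarith
qed

lemma ind_int: "integrable lborel (indicat_real {l<..<u::real})"
proof (cases "l \<le> u")
  case True then show ?thesis by (intro integrable_real_indicator) auto
next
  case False then have "{l<..<u} = {}" by auto
  thus ?thesis by simp
qed

lemma ind_int2: "integrable lborel (indicat_real {l..<u::real})"
proof (cases "l \<le> u")
  case True then show ?thesis by (intro integrable_real_indicator) auto
next
  case False then have "{l..<u} = {}" by auto
  thus ?thesis by simp
qed

lemma fcut_le: "c0 > 0 \<Longrightarrow> fcut c0 t \<le> c0"
  unfolding fcut_def using mult_strict_left_mono[of t 1 c0] by auto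

theorem mainTheorem4:
  fixes a b c0 eps :: real and g :: "real \<Rightarrow> real"
  assumes "a < b" and "c0 > 0"
    and "set_integrable lborel {a<..<b} g"
    and "eps > 0"
  shows "\<exists>xe. \<exists>G'. G' \<subseteq> grid a b eps xe \<and>
    (LINT t:(\<Union>x\<in>G'. Ieps eps x)|lborel. \<bar>g t\<bar>) + 2 * real (card (grid a b eps xe - G'))
      \<le> 1 / (c0 * eps) * (LINT x:{a<..<b}|lborel.
            fcut c0 (eps * avg (Ieps eps x \<inter> {a<..<b}) (\<lambda>t. \<bar>g t\<bar>)))"
proof -
  have gi: "integrable lborel (\<lambda>t. indicator {a<..<b} t * g t)"
    using assms(3) by (simp add: set_integrable_def)
  define Gt where "Gt t = \<bar>indicator {a<..<b} t * g t\<bar>" for t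
  have Gti: "integrable lborel Gt" unfolding Gt_def using gi by (rule integrable_abs)
  have Gtm[measurable]: "Gt \<in> borel_measurable lborel" using Gti by (rule borel_measurable_integrable)
  have Gt0: "Gt t \<ge> 0" for t unfolding Gt_def by simp
  define Jg where "Jg x = (\<integral>t. indicator (Ieps eps x) t * Gt t \<partial>lborel)" for x
  have Jgi: "integrable lborel (\<lambda>t. indicator (Ieps eps x) t * Gt t)" for x
    using integrable_mult_indicator[OF _ Gti, of "Ieps eps x"] by (simp add: Ieps_def)
  have Jg0: "Jg x \<ge> 0" for x unfolding Jg_def by (intro integral_nonneg_AE AE_I2) (simp add: Gt0)
  have Jgm[measurable]: "Jg \<in> borel_measurable lborel"
  proof -
    have "Jg = (\<lambda>x. \<integral>t. of_bool (x - eps < t \<and> t < x + eps) * Gt t \<partial>lborel)"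
      by (auto simp: Jg_def Ieps_def indicator_def)
    also have "\<dots> \<in> borel_measurable lborel" by measurable
    finally show ?thesis .
  qed
  define m where "m x = max 0 (min (x+eps) b - max (x-eps) a)" for x
  have mm[measurable]: "m \<in> borel_measurable lborel" unfolding m_def by measurable
  have m0: "m x \<ge> 0" for x unfolding m_def by simp
  have meas: "measure lborel (Ieps eps x \<inter> {a<..<b}) = m x" for x
  proof -
    have e: "Ieps eps x \<inter> {a<..<b} = {max (x-eps) a <..< min (x+eps) b}" by (auto simp: Ieps_def)
    show ?thesis
    proof (cases "max (x-eps) a \<le> min (x+eps) b")
      case True
      have 1: "measure lborel {max (x-eps) a <..< min (x+eps) b} = min (x+eps) b - max (x-eps) a"
        by (rule measure_lborel_Ioo[OF True])
      have 2: "max 0 (min (x+eps) b - max (x-eps) a) = min (x+eps) b - max (x-eps) a"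
        using True by (intro max_absorb2) linarith
      show ?thesis unfolding e m_def 1 2 ..
    next
      case False then have 3: "{max (x-eps) a <..< min (x+eps) b} = {}" by auto
      have 4: "max 0 (min (x+eps) b - max (x-eps) a) = 0"
        using False by (intro max_absorb1) linarith
      show ?thesis unfolding e m_def 3 4 by simp
    qed
  qed
  have lint: "(LINT t:(Ieps eps x \<inter> {a<..<b})|lborel. \<bar>g t\<bar>) = Jg x" for x
    unfolding set_lebesgue_integral_def Jg_def Gt_def
    by (rule Bochner_Integration.integral_cong) (auto simp: indicator_def)
  define hf where "hf x = fcut c0 (eps * avg (Ieps eps x \<inter> {a<..<b}) (\<lambda>t. \<bar>g t\<bar>))" for x
  have hf_eq: "hf x = fcut c0 (eps * (1 / m x * Jg x))" for x
    unfolding hf_def avg_def meas lint ..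
  have hfm[measurable]: "hf \<in> borel_measurable lborel"
    unfolding hf_eq[abs_def] fcut_def by measurable
  have hf0: "0 \<le> hf x" for x
    using Jg0[of x] m0[of x] assms(2,4) unfolding hf_eq fcut_def by simp
  have hfc: "hf x \<le> c0" for x
    unfolding hf_def by (rule fcut_le[OF assms(2)])
  define C where "C = 1 / (c0 * eps) * (LINT x:{a<..<b}|lborel. hf x)"
  define H where "H y = indicator {a+eps<..<b-eps} y * (2/c0 * hf y)" for y
  have Hm[measurable]: "H \<in> borel_measurable lborel" unfolding H_def by measurable
  have Hb: "\<bar>H y\<bar> \<le> 2 * indicator {a+eps<..<b-eps} y" for y
    using hf0[of y] hfc[of y] assms(2) unfolding H_def indicator_def by (simp add: field_simps)
  have Hb2: "\<bar>H y\<bar> \<le> 2" for y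
    using Hb[of y] by (cases "y \<in> {a+eps<..<b-eps}") auto
  have Hi: "integrable lborel H"
  proof (rule Bochner_Integration.integrable_bound[where f="\<lambda>y. 2 * indicator {a+eps<..<b-eps} y" and g=H])
    show "integrable lborel (\<lambda>y. 2 * indicat_real {a + eps<..<b - eps} y)" using ind_int by simp
    show "H \<in> borel_measurable lborel" by simp
    show "AE x in lborel. norm (H x) \<le> norm (2 * indicat_real {a + eps<..<b - eps} x)"
      using Hb by (intro AE_I2) (simp add: indicator_def)
  qed
  define N where "N = ceiling ((\<bar>a\<bar>+\<bar>b\<bar>)/(2*eps)) + 1"
  define S where "S xe = (\<Sum>k\<in>{-N..N}. H (xe + 2*eps*real_of_int k))" for xe
  have partA: "\<exists>G'. G' \<subseteq> grid a b eps xe \<and>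
    (LINT t:(\<Union>x\<in>G'. Ieps eps x)|lborel. \<bar>g t\<bar>) + 2 * real (card (grid a b eps xe - G')) = S xe"
    if xe: "0 \<le> xe" "xe < 2*eps" for xe
  proof -
    define K where "K = {k \<in> {-N..N}. xe + 2*eps*real_of_int k \<in> {a+eps<..<b-eps}}"
    define G where "G = grid a b eps xe"
    have GK: "G = (\<lambda>k. xe + 2*eps*real_of_int k) ` K"
    proof
      show "G \<subseteq> (\<lambda>k. xe + 2*eps*real_of_int k) ` K"
      proof
        fix x assume "x \<in> G"
        then obtain k where k: "x = xe + 2*eps*real_of_int k" "xe + 2*eps*real_of_int k \<in> {a+eps<..<b-eps}"
          unfolding G_def grid_def by blast
        have r: "2*eps*real_of_int k \<le> xe + 2*eps*real_of_int k" "xe + 2*eps*real_of_int k < 2*eps*real_of_int k + 2*eps"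
          "a < xe + 2*eps*real_of_int k" "xe + 2*eps*real_of_int k < b"
          using xe k(2) assms(4) by auto
        have "k \<in> {-N..N}" using krange[OF assms(4) r] unfolding N_def by auto
        then show "x \<in> (\<lambda>k. xe + 2*eps*real_of_int k) ` K" using k unfolding K_def by auto
      qed
      show "(\<lambda>k. xe + 2*eps*real_of_int k) ` K \<subseteq> G"
        unfolding K_def G_def grid_def by auto
    qed
    have injK: "inj_on (\<lambda>k. xe + 2*eps*real_of_int k) K"
      using assms(4) by (auto simp: inj_on_def)
    have finK: "finite K" unfolding K_def by (rule finite_subset[of _ "{-N..N}"]) auto
    have finG: "finite G" unfolding GK using finK by simp
    have Gsub: "Ieps eps x \<subseteq> {a<..<b}" if "x \<in> G" for x
      using that assms(4) by (auto simp: G_def grid_def Ieps_def)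
    have Gm: "m x = 2*eps" if "x \<in> G" for x
    proof -
      have "a + eps < x" "x < b - eps" using that by (auto simp: G_def grid_def)
      then show ?thesis unfolding m_def using assms(4) by simp
    qed
    have disj: "disjoint_family_on (Ieps eps) G"
      unfolding disjoint_family_on_def
    proof (intro ballI impI)
      fix x y assume "x \<in> G" "y \<in> G" "x \<noteq> y"
      then obtain k l where kl: "x = xe + 2*eps*real_of_int k" "y = xe + 2*eps*real_of_int l" "k \<noteq> l"
        unfolding GK by auto
      have "1 \<le> \<bar>real_of_int (k - l)\<bar>" using kl(3) by linarith
      hence "2*eps*1 \<le> 2*eps*\<bar>real_of_int (k - l)\<bar>" using assms(4) by (intro mult_left_mono) auto
      also have "\<dots> = \<bar>x - y\<bar>"
      proof -
        have "x - y = 2*eps*real_of_int (k - l)" using kl(1,2) by (simp add: algebra_simps)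
        then show ?thesis using assms(4) by (simp add: abs_mult)
      qed
      finally have "2*eps \<le> \<bar>x - y\<bar>" by simp
      then show "Ieps eps x \<inter> Ieps eps y = {}" by (auto simp: Ieps_def)
    qed
    define G' where "G' = {x \<in> G. Jg x \<le> 2}"
    have G'G: "G' \<subseteq> G" unfolding G'_def by auto
    have finG': "finite G'" using finG G'G finite_subset by blast
    have L1: "(LINT t:(\<Union>x\<in>G'. Ieps eps x)|lborel. \<bar>g t\<bar>) = (\<Sum>x\<in>G'. Jg x)"
    proof -
      have pt: "indicator (\<Union>x\<in>G'. Ieps eps x) t *\<^sub>R \<bar>g t\<bar> = (\<Sum>x\<in>G'. indicator (Ieps eps x) t * Gt t)" for t
      proof -
        have "indicator (\<Union>x\<in>G'. Ieps eps x) t = (\<Sum>x\<in>G'. indicator (Ieps eps x) t :: real)"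
          by (rule indicator_UN_disjoint[OF finG' disjoint_family_on_mono[OF G'G disj]])
        hence "indicator (\<Union>x\<in>G'. Ieps eps x) t *\<^sub>R \<bar>g t\<bar> = (\<Sum>x\<in>G'. indicator (Ieps eps x) t * \<bar>g t\<bar>)"
          by (simp add: sum_distrib_right)
        also have "\<dots> = (\<Sum>x\<in>G'. indicator (Ieps eps x) t * Gt t)"
        proof (rule sum.cong)
          fix x assume "x \<in> G'"
          hence "Ieps eps x \<subseteq> {a<..<b}" using Gsub G'G by auto
          thus "indicator (Ieps eps x) t * \<bar>g t\<bar> = indicator (Ieps eps x) t * Gt t"
            by (auto simp: Gt_def indicator_def)
        qed simp
        finally show ?thesis .
      qed
      show ?thesis unfolding set_lebesgue_integral_def pt Jg_def
        using Jgi by (intro Bochner_Integration.integral_sum) auto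
    qed
    have L2: "2 * real (card (G - G')) = (\<Sum>x\<in>G - G'. 2)" by simp
    have L3: "(\<Sum>x\<in>G'. Jg x) + (\<Sum>x\<in>G - G'. 2) = (\<Sum>x\<in>G. if Jg x \<le> 2 then Jg x else 2)"
    proof -
      have "G' = G \<inter> {x. Jg x \<le> 2}" "G - G' = G \<inter> - {x. Jg x \<le> 2}" unfolding G'_def by auto
      then show ?thesis using sum.If_cases[OF finG, of "\<lambda>x. Jg x \<le> 2" Jg "\<lambda>x. 2"] by simp
    qed
    have L4: "(if Jg x \<le> 2 then Jg x else 2) = 2/c0 * hf x" if "x \<in> G" for x
    proof -
      have "hf x = fcut c0 (Jg x / 2)" unfolding hf_eq Gm[OF that] using assms(4) by simp
      then show ?thesis using assms(2) unfolding fcut_def by auto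
    qed
    have L5: "(\<Sum>x\<in>G. 2/c0 * hf x) = (\<Sum>k\<in>K. 2/c0 * hf (xe + 2*eps*real_of_int k))"
      unfolding GK by (simp add: sum.reindex[OF injK])
    have L6: "(\<Sum>k\<in>K. 2/c0 * hf (xe + 2*eps*real_of_int k)) = S xe"
    proof -
      have "S xe = (\<Sum>k\<in>{-N..N}. if xe + 2*eps*real_of_int k \<in> {a+eps<..<b-eps} then 2/c0 * hf (xe + 2*eps*real_of_int k) else 0)"
        unfolding S_def H_def by (rule sum.cong) (auto simp: indicator_def)
      also have "\<dots> = (\<Sum>k\<in>K. 2/c0 * hf (xe + 2*eps*real_of_int k))"
        unfolding K_def by (rule sum.inter_filter[symmetric]) simp
      finally show ?thesis ..
    qed
    show ?thesis
    proof (intro exI conjI)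
      show "G' \<subseteq> grid a b eps xe" using G'G unfolding G_def .
      have "(\<Sum>x\<in>G. if Jg x \<le> 2 then Jg x else 2) = (\<Sum>x\<in>G. 2/c0 * hf x)"
        using L4 by (rule sum.cong[OF refl])
      then show "(LINT t:(\<Union>x\<in>G'. Ieps eps x)|lborel. \<bar>g t\<bar>) + 2 * real (card (grid a b eps xe - G')) = S xe"
        using L1 L2 L3 L5 L6 unfolding G_def[symmetric] by simp
    qed
  qed
  have partB: "\<exists>xe. 0 \<le> xe \<and> xe < 2*eps \<and> S xe \<le> C"
  proof (rule ccontr)
    assume nex: "\<not> ?thesis"
    have gt: "C < S xe" if "0 \<le> xe" "xe < 2*eps" for xe using nex that by force
    have iK: "integrable lborel (\<lambda>xe. indicator {0..<2*eps} xe * H (xe + 2*eps*real_of_int k))" for k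
    proof (rule Bochner_Integration.integrable_bound[where f="\<lambda>y. 2 * indicator {0..<2*eps} y"])
      show "integrable lborel (\<lambda>y. 2 * indicat_real {0..<2*eps} y)" using ind_int2 by simp
      show "(\<lambda>xe. indicator {0..<2*eps} xe * H (xe + 2*eps*real_of_int k)) \<in> borel_measurable lborel"
        by measurable
      show "AE x in lborel. norm (indicator {0..<2*eps} x * H (x + 2*eps*real_of_int k)) \<le> norm (2 * indicat_real {0..<2*eps} x)"
        using Hb2 by (intro AE_I2) (simp add: indicator_def abs_mult)
    qed
    have iS: "integrable lborel (\<lambda>xe. indicator {0..<2*eps} xe * S xe)"
      unfolding S_def sum_distrib_left using iK by (intro Bochner_Integration.integrable_sum) auto
    have tr: "(\<integral>xe. indicator {0..<2*eps} xe * H (xe + 2*eps*real_of_int k) \<partial>lborel)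
       = (\<integral>y. indicator {2*eps*real_of_int k..<2*eps*real_of_int k+2*eps} y * H y \<partial>lborel)" for k
    proof -
      have "(\<integral>y. indicator {2*eps*real_of_int k..<2*eps*real_of_int k+2*eps} y * H y \<partial>lborel)
        = \<bar>1\<bar> *\<^sub>R (\<integral>x. indicator {2*eps*real_of_int k..<2*eps*real_of_int k+2*eps} (2*eps*real_of_int k + 1 * x) * H (2*eps*real_of_int k + 1 * x) \<partial>lborel)"
        by (rule lborel_integral_real_affine) simp
      also have "\<dots> = (\<integral>xe. indicator {0..<2*eps} xe * H (xe + 2*eps*real_of_int k) \<partial>lborel)"
        by (simp add: indicator_def add.commute)
      finally show ?thesis ..
    qed
    have part: "(\<Sum>k\<in>{-N..N}. indicator {2*eps*real_of_int k..<2*eps*real_of_int k+2*eps} y * H y) = H y" for y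
    proof (cases "y \<in> {a+eps<..<b-eps}")
      case False then show ?thesis by (simp add: H_def)
    next
      case True
      define k0 where "k0 = floor (y / (2*eps))"
      have k0a: "real_of_int k0 \<le> y / (2*eps)" unfolding k0_def by (rule of_int_floor_le)
      have k0b: "y / (2*eps) < real_of_int k0 + 1" unfolding k0_def by (rule real_of_int_floor_add_one_gt)
      have ind: "indicator {2*eps*real_of_int k..<2*eps*real_of_int k+2*eps} y = (if k = k0 then 1 else (0::real))" for k
      proof -
        have "(2*eps*real_of_int k \<le> y \<and> y < 2*eps*real_of_int k+2*eps) \<longleftrightarrow>
              (real_of_int k \<le> y / (2*eps) \<and> y / (2*eps) < real_of_int k + 1)"
          using assms(4) by (simp add: field_simps)
        also have "\<dots> \<longleftrightarrow> k = k0" unfolding k0_def by linarith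
        finally show ?thesis by (simp add: indicator_def)
      qed
      have k0r: "2*eps*real_of_int k0 \<le> y" "y < 2*eps*real_of_int k0 + 2*eps"
        using k0a k0b assms(4) by (simp_all add: field_simps)
      have ab: "a < y" "y < b" using True assms(4) by auto
      have "k0 \<in> {-N..N}" using krange[OF assms(4) k0r ab] unfolding N_def by auto
      moreover have "(\<Sum>k\<in>{-N..N}. (if k = k0 then 1 else 0) * H y) = (\<Sum>k\<in>{-N..N}. if k = k0 then H y else 0)"
        by (rule sum.cong) auto
      ultimately show ?thesis unfolding ind by simp
    qed
    have "(\<integral>xe. indicator {0..<2*eps} xe * S xe \<partial>lborel)
        = (\<Sum>k\<in>{-N..N}. \<integral>xe. indicator {0..<2*eps} xe * H (xe + 2*eps*real_of_int k) \<partial>lborel)"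
      unfolding S_def sum_distrib_left using iK by (intro Bochner_Integration.integral_sum) auto
    also have "\<dots> = (\<Sum>k\<in>{-N..N}. \<integral>y. indicator {2*eps*real_of_int k..<2*eps*real_of_int k+2*eps} y * H y \<partial>lborel)"
      using tr by simp
    also have "\<dots> = (\<integral>y. (\<Sum>k\<in>{-N..N}. indicator {2*eps*real_of_int k..<2*eps*real_of_int k+2*eps} y * H y) \<partial>lborel)"
      using integrable_mult_indicator[OF _ Hi] by (intro Bochner_Integration.integral_sum[symmetric]) auto
    also have "\<dots> = (\<integral>y. H y \<partial>lborel)" unfolding part ..
    also have "\<dots> \<le> (\<integral>y. indicator {a<..<b} y * (2/c0 * hf y) \<partial>lborel)"
    proof (rule integral_mono)
      show "integrable lborel H" by (rule Hi)
      show "integrable lborel (\<lambda>y. indicator {a<..<b} y * (2/c0 * hf y))"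
      proof (rule Bochner_Integration.integrable_bound[where f="\<lambda>y. 2 * indicator {a<..<b} y"])
        show "integrable lborel (\<lambda>y. 2 * indicat_real {a<..<b} y)" using ind_int by simp
        show "(\<lambda>y. indicator {a<..<b} y * (2/c0 * hf y)) \<in> borel_measurable lborel" by measurable
        show "AE x in lborel. norm (indicator {a<..<b} x * (2/c0 * hf x)) \<le> norm (2 * indicat_real {a<..<b} x)"
        proof (intro AE_I2)
          fix x
          have "2/c0 * hf x \<le> 2" using hfc[of x] assms(2) by (simp add: field_simps)
          then show "norm (indicator {a<..<b} x * (2/c0 * hf x)) \<le> norm (2 * indicat_real {a<..<b} x)"
            using hf0[of x] assms(2) by (simp add: indicator_def)
        qed
      qed
      show "H y \<le> indicator {a<..<b} y * (2/c0 * hf y)" for y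
        using hf0[of y] assms(2,4) by (auto simp: H_def indicator_def)
    qed
    also have "\<dots> = 2/c0 * (LINT x:{a<..<b}|lborel. hf x)"
      unfolding set_lebesgue_integral_def by (simp add: mult.left_commute)
    also have "\<dots> = 2*eps * C" unfolding C_def using assms(2,4) by (simp add: field_simps)
    finally have le: "(\<integral>xe. indicator {0..<2*eps} xe * S xe \<partial>lborel) \<le> 2*eps*C" .
    define D where "D xe = indicator {0..<2*eps} xe * S xe - C * indicator {0..<2*eps} xe" for xe
    have iD: "integrable lborel D" unfolding D_def using iS ind_int2 by auto
    have D0: "0 \<le> D xe" for xe using gt[of xe] by (auto simp: D_def indicator_def)
    have "(\<integral>xe. D xe \<partial>lborel) = (\<integral>xe. indicator {0..<2*eps} xe * S xe \<partial>lborel) - C * (2*eps)"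
      unfolding D_def using iS ind_int2 assms(4) by simp
    with le have "(\<integral>xe. D xe \<partial>lborel) \<le> 0" by (simp add: mult.commute)
    moreover have "(\<integral>xe. D xe \<partial>lborel) \<ge> 0" using D0 by (intro integral_nonneg_AE AE_I2) auto
    ultimately have "(\<integral>xe. D xe \<partial>lborel) = 0" by simp
    hence "AE x in lborel. D x = 0" using iD D0 by (subst (asm) integral_nonneg_eq_0_iff_AE) auto
    hence "AE x in lborel. x \<notin> {0..<2*eps}"
      by eventually_elim (use gt in \<open>auto simp: D_def\<close>)
    hence "emeasure lborel {0..<2*eps} = 0"
      by (subst (asm) AE_iff_measurable[of "{0..<2*eps}"]) auto
    then show False using assms(4) by simp
  qed
  from partB obtain xe where xe: "0 \<le> xe" "xe < 2*eps" "S xe \<le> C" by blast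
  from partA[OF xe(1,2)] obtain G' where G': "G' \<subseteq> grid a b eps xe"
    "(LINT t:(\<Union>x\<in>G'. Ieps eps x)|lborel. \<bar>g t\<bar>) + 2 * real (card (grid a b eps xe - G')) = S xe"
    by blast
  have CC: "C = 1 / (c0 * eps) * (LINT x:{a<..<b}|lborel.
            fcut c0 (eps * avg (Ieps eps x \<inter> {a<..<b}) (\<lambda>t. \<bar>g t\<bar>)))"
    unfolding C_def hf_def ..
  show ?thesis
    apply (rule exI[of _ xe], rule exI[of _ G'])
    using G' xe(3) CC by linarith
qed

end
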